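(* Fix $(\sigma_s,\mu)\in\mathbb{R}^2$ and $\delta\in(0,1/8)$. For $-1/2<\operatorname{Im} t<1/2$ let $$f(t) = -\frac{\operatorname{Li}_2(-e^{2 \pi \mu }) + \operatorname{Li}_2(-e^{2 \pi (t-\sigma_s)}) + \operatorname{Li}_2(-e^{2 \pi(t+\sigma_s)})}{2 \pi i}+2 i \pi \mu t+\pi (t - \mu) +\frac{5 i \pi }{12},\qquad g(t) = e^{\pi (t- \mu)}.$$ Writing $t=t_1+it_2$, there are constants $C>0$ and $c>0$ such that $$\big|e^{f(t)/b^2} g(t)\big| \leq C e^{-\frac{c}{b^2}|t_1|}$$ for all sufficiently large $|t_1|$, all $t_2\in(-1/2,-1/4-\delta)$, and all sufficiently small $b>0$.
   Context: $\operatorname{Li}_2(z)=-\int_0^z\frac{\ln(1-u)}{u}du$ on $\mathbb{C}\setminus[1,\infty)$, with the principal logarithm. *)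

theory Defs
  imports "HOL-Complex_Analysis.Complex_Analysis"
begin

text \<open>Dilogarithm on the cut plane C minus [1,oo): Li2 z = - integral_0^z Ln(1-u)/u du,
  integrated along the straight segment from 0 to z (the cut plane is star-shaped
  with respect to 0, so this is the principal branch). Ln is the principal logarithm.\<close>
definition Li2 :: "complex \<Rightarrow> complex" where
  "Li2 z = - contour_integral (linepath 0 z) (\<lambda>u. Ln (1 - u) / u)"

definition f51 :: "real \<Rightarrow> real \<Rightarrow> complex \<Rightarrow> complex" where
  "f51 \<sigma> \<mu> t =
     - (Li2 (- exp (complex_of_real (2 * pi * \<mu>)))
        + Li2 (- exp (2 * complex_of_real pi * (t - complex_of_real \<sigma>)))
        + Li2 (- exp (2 * complex_of_real pi * (t + complex_of_real \<sigma>))))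
       / (2 * complex_of_real pi * \<i>)
     + 2 * \<i> * complex_of_real pi * complex_of_real \<mu> * t
     + complex_of_real pi * (t - complex_of_real \<mu>)
     + 5 * \<i> * complex_of_real pi / 12"

definition g51 :: "real \<Rightarrow> complex \<Rightarrow> complex" where
  "g51 \<mu> t = exp (complex_of_real pi * (t - complex_of_real \<mu>))"

end

theory Submission
  imports Defs
begin


definition S0 :: "complex set" where "S0 = {z. Im z \<noteq> 0 \<or> Re z < 1}"
definition Ft :: "complex \<Rightarrow> complex" where "Ft u = (if u = 0 then -1 else Ln (1 - u) / u)"

lemma open_S0: "open S0"
proof -
  have "S0 = {z. Im z < 0} \<union> {z. Im z > 0} \<union> {z. Re z < 1}" unfolding S0_def by auto
  moreover have "open {z::complex. Im z < 0}" "open {z::complex. Im z > 0}" "open {z::complex. Re z < 1}"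
    by (auto intro!: open_Collect_less continuous_intros)
  ultimately show ?thesis by (metis open_Un)
qed

lemma S0_nonpos: "z \<in> S0 \<Longrightarrow> 1 - z \<notin> \<real>\<^sub>\<le>\<^sub>0"
  unfolding S0_def by (auto simp: complex_nonpos_Reals_iff)

lemma seg_S0: assumes "y \<in> S0" shows "closed_segment 0 y \<subseteq> S0"
proof
  fix x assume "x \<in> closed_segment 0 y"
  then obtain u where u: "0 \<le> u" "u \<le> 1" "x = u *\<^sub>R y" by (auto simp: closed_segment_def)
  show "x \<in> S0"
  proof (cases "u = 0")
    case True then show ?thesis using u by (simp add: S0_def)
  next
    case False
    with u have "u > 0" by simp
    show ?thesis using assms u \<open>u>0\<close> unfolding S0_def
      by (auto simp: mult_le_cancel_left1) (smt (verit) mult_le_cancel_left1 mult_nonneg_nonpos)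
  qed
qed

lemma Ft_deriv0: "((\<lambda>x. Ln (1 - x)) has_field_derivative -1) (at 0)"
proof -
  have "((\<lambda>x. Ln (1 - x)) has_field_derivative (inverse (1 - 0) * (-1))) (at 0)"
    by (rule DERIV_chain2[where f=Ln]) (auto intro!: has_field_derivative_Ln derivative_eq_intros)
  then show ?thesis by simp
qed

lemma Ft_cont0: "isCont Ft 0"
proof -
  have "((\<lambda>y. (Ln (1 - y) - Ln (1 - 0)) / (y - 0)) \<longlongrightarrow> -1) (at 0)"
    using Ft_deriv0 by (simp only: has_field_derivative_iff)
  then have "((\<lambda>y. Ln (1 - y) / y) \<longlongrightarrow> -1) (at 0)" by simp
  then have "(Ft \<longlongrightarrow> -1) (at 0)"
    by (rule tendsto_cong[THEN iffD1, rotated]) (auto simp: Ft_def eventually_at_filter)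
  then show ?thesis by (simp add: isCont_def Ft_def)
qed

lemma Ft_deriv: assumes "z \<in> S0" "z \<noteq> 0"
  shows "(Ft has_field_derivative (- inverse (1 - z) * z - Ln (1 - z)) / z^2) (at z)"
proof -
  have "((\<lambda>x. Ln (1 - x) / x) has_field_derivative (- inverse (1 - z) * z - Ln (1 - z)) / z^2) (at z)"
    using assms S0_nonpos[OF assms(1)]
    by (auto intro!: derivative_eq_intros DERIV_chain2[where f=Ln] has_field_derivative_Ln
             simp: power2_eq_square field_simps)
  then show ?thesis
    by (rule has_field_derivative_transform_within_open[where S="S0 - {0}"])
       (use assms open_S0 in \<open>auto simp: Ft_def open_Diff\<close>)
qed

lemma Ft_cont: "continuous_on S0 Ft"
proof -
  have "isCont Ft z" if "z \<in> S0" for z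
  proof (cases "z = 0")
    case True then show ?thesis using Ft_cont0 by simp
  next
    case False then show ?thesis using Ft_deriv[OF that False]
      using field_differentiable_imp_continuous_at field_differentiable_def by blast
  qed
  then show ?thesis by (simp add: continuous_at_imp_continuous_on)
qed

lemma CI_Ft_deriv: assumes "z \<in> S0"
  shows "((\<lambda>z. contour_integral (linepath 0 z) Ft) has_field_derivative Ft z) (at z)"
proof -
  have a: "0 \<in> S0" by (simp add: S0_def)
  { fix b c
    assume "closed_segment b c \<subseteq> S0"
    then have abcs: "convex hull {0, b, c} \<subseteq> S0"
      using a seg_S0 by (simp add: starlike_convex_subset)
    then have "continuous_on (convex hull {0, b, c}) Ft"
      by (simp add: continuous_on_subset [OF Ft_cont])
    then have "(Ft has_contour_integral 0) (linepath 0 b +++ linepath b c +++ linepath c 0)"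
      using abcs interior_subset Ft_deriv
      by (intro Cauchy_theorem_triangle_cofinite [of _ _ _ _ "{0}"]) (auto simp: field_differentiable_def, blast)
  } note 0 = this
  show ?thesis
    using "0" a seg_S0 Ft_cont has_chain_integral_chain_integral3 open_S0 assms
      triangle_contour_integrals_starlike_primitive by force
qed

lemma Li2_Ft: assumes "z \<noteq> 0" shows "Li2 z = - contour_integral (linepath 0 z) Ft"
proof -
  have "contour_integral (linepath 0 z) (\<lambda>u. Ln (1 - u) / u) = contour_integral (linepath 0 z) Ft"
    by (rule contour_integral_spike_finite_simple_path[of "{0}"]) (use assms in \<open>auto simp: Ft_def\<close>)
  then show ?thesis by (simp add: Li2_def)
qed

lemma Li2_deriv: assumes "z \<in> S0" "z \<noteq> 0"
  shows "(Li2 has_field_derivative - (Ln (1 - z) / z)) (at z)"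
proof -
  have "((\<lambda>z. - contour_integral (linepath 0 z) Ft) has_field_derivative - Ft z) (at z)"
    using CI_Ft_deriv[OF assms(1)] by (rule DERIV_minus)
  then have "((\<lambda>z. - contour_integral (linepath 0 z) Ft) has_field_derivative - (Ln (1 - z) / z)) (at z)"
    using assms by (simp add: Ft_def)
  then show ?thesis
    by (rule has_field_derivative_transform_within_open[where S="S0 - {0}"])
       (use assms open_S0 Li2_Ft in \<open>auto simp: open_Diff\<close>)
qed

lemma Li2_small: assumes "z \<noteq> 0" "norm z < 1/2" shows "norm (Li2 z) \<le> 1"
proof -
  have zS: "z \<in> S0" using assms complex_Re_le_cmod[of z] by (auto simp: S0_def)
  have int: "Ft contour_integrable_on (linepath 0 z)"
    by (rule contour_integrable_continuous_linepath, rule continuous_on_subset[OF Ft_cont seg_S0[OF zS]])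
  have B: "norm (Ft u) \<le> 2" if "u \<in> closed_segment 0 z" for u
  proof -
    have "norm u \<le> norm z" using that segment_bound1[of u 0 z] by simp
    show ?thesis
    proof (cases "u = 0")
      case True then show ?thesis by (simp add: Ft_def)
    next
      case False
      have "norm (Ln (1 + (-u))) \<le> 2 * norm (-u)"
        by (rule norm_Ln_le) (use \<open>norm u \<le> norm z\<close> assms in auto)
      then show ?thesis using False by (simp add: Ft_def norm_divide divide_le_eq)
    qed
  qed
  have "norm (contour_integral (linepath 0 z) Ft) \<le> 2 * norm (z - 0)"
    by (rule contour_integral_bound_linepath[OF int]) (use B in auto)
  then show ?thesis using Li2_Ft[OF assms(1)] assms by simp
qed



lemma Im_neg_exp: "Im (- exp (Complex s t)) = - exp s * sin t"
  by (simp add: Im_exp)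

lemma q_deriv:
  assumes "-pi < \<theta>" "\<theta> < 0"
  shows "((\<lambda>s. Im (Li2 (- exp (Complex s \<theta>)))) has_real_derivative - Im (Ln (1 + exp (Complex s \<theta>)))) (at s)"
proof -
  define w where "w = Complex s \<theta>"
  have sn: "sin \<theta> < 0" using assms sin_gt_zero[of "-\<theta>"] by simp
  have zS: "- exp w \<in> S0" using sn by (simp add: S0_def w_def Im_exp)
  have nz: "- exp w \<noteq> 0" by simp
  have H: "((\<lambda>w. Li2 (- exp w)) has_field_derivative (- (Ln (1 - (- exp w)) / (- exp w))) * (- exp w)) (at w)"
    by (rule DERIV_chain2[where g="\<lambda>w. - exp w", OF Li2_deriv[OF zS nz]]) (auto intro!: derivative_eq_intros)
  have H': "((\<lambda>w. Li2 (- exp w)) has_field_derivative - Ln (1 + exp w)) (at w)"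
    using H by simp
  have g: "((\<lambda>s. Complex s \<theta>) has_vector_derivative 1) (at s)"
  proof -
    have "((\<lambda>s. of_real s :: complex) has_vector_derivative of_real 1) (at s)"
      by (rule has_vector_derivative_of_real[OF DERIV_ident])
    then have "((\<lambda>s. of_real s + \<i> * of_real \<theta>) has_vector_derivative 1) (at s)"
      by (simp add: has_vector_derivative_add_const)
    moreover have "(\<lambda>s. of_real s + \<i> * of_real \<theta>) = (\<lambda>s. Complex s \<theta>)"
      by (auto simp: complex_eq_iff)
    ultimately show ?thesis by simp
  qed
  have "(((\<lambda>w. Li2 (- exp w)) \<circ> (\<lambda>s. Complex s \<theta>)) has_vector_derivative (1 * - Ln (1 + exp w))) (at s)"
    by (rule field_vector_diff_chain_at[OF g]) (use H' w_def in simp)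
  then have "((\<lambda>s. Li2 (- exp (Complex s \<theta>))) has_derivative (\<lambda>x. x *\<^sub>R (- Ln (1 + exp w)))) (at s)"
    by (simp add: has_vector_derivative_def o_def)
  then have "((\<lambda>s. Im (Li2 (- exp (Complex s \<theta>)))) has_derivative (\<lambda>x. Im (x *\<^sub>R (- Ln (1 + exp w))))) (at s)"
    by (rule has_derivative_Im)
  moreover have "(\<lambda>x. Im (x *\<^sub>R (- Ln (1 + exp w)))) = (*) (- Im (Ln (1 + exp w)))"
    by auto
  ultimately show ?thesis by (simp add: has_field_derivative_def w_def)
qed

lemma Ln_decomp:
  assumes "-pi < \<theta>" "\<theta> < 0"
  shows "Im (Ln (1 + exp (Complex s \<theta>))) = \<theta> + Im (Ln (1 + exp (- Complex s \<theta>)))"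
    and "0 < Im (Ln (1 + exp (- Complex s \<theta>)))" "Im (Ln (1 + exp (- Complex s \<theta>))) < pi"
proof -
  define w where "w = Complex s \<theta>"
  have sn: "sin \<theta> < 0" using assms sin_gt_zero[of "-\<theta>"] by simp
  have pos: "0 < Im (1 + exp (- w))" using sn by (simp add: w_def Im_exp mult_pos_neg)
  then have ip: "0 < Im (Ln (1 + exp (- w)))" "Im (Ln (1 + exp (- w))) < pi"
    using Im_Ln_pos_lt_imp by auto
  have Lw: "Ln (exp w) = w" using assms by (simp add: w_def)
  have nz: "1 + exp (- w) \<noteq> 0"
  proof
    assume "1 + exp (- w) = 0"
    then have "Im (1 + exp (- w)) = 0" by simp
    then show False using pos by simp
  qed
  have eq: "1 + exp w = exp w * (1 + exp (- w))" by (simp add: distrib_left exp_minus)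
  have "Ln (1 + exp w) = Ln (exp w) + Ln (1 + exp (- w))"
    unfolding eq by (rule Ln_times_simple) (use ip Lw assms nz in \<open>auto simp: w_def\<close>)
  then show "Im (Ln (1 + exp (Complex s \<theta>))) = \<theta> + Im (Ln (1 + exp (- Complex s \<theta>)))"
    using Lw by (simp add: w_def)
  show "0 < Im (Ln (1 + exp (- Complex s \<theta>)))" "Im (Ln (1 + exp (- Complex s \<theta>))) < pi"
    using ip by (auto simp: w_def)
qed

lemma q_small:
  assumes "s \<le> -1"
  shows "\<bar>Im (Li2 (- exp (Complex s \<theta>)))\<bar> \<le> 1"
proof -
  have "exp s \<le> exp (-1::real)" using assms by simp
  also have "exp (-1::real) < 1/2"
  proof -
    have "3/2 \<le> exp (1/2::real)" using exp_ge_add_one_self[of "1/2::real"] by simp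
    then have "(3/2) * (3/2) \<le> exp (1/2::real) * exp (1/2)" by (intro mult_mono) auto
    also have "\<dots> = exp 1" by (simp flip: exp_add)
    finally show ?thesis by (simp add: exp_minus field_simps)
  qed
  finally have "norm (- exp (Complex s \<theta>)) < 1/2" by (simp add: norm_exp_eq_Re)
  then have "norm (Li2 (- exp (Complex s \<theta>))) \<le> 1" by (intro Li2_small) auto
  then show ?thesis using abs_Im_le_cmod order_trans by blast
qed

lemma q_lower:
  assumes "-pi < \<theta>" "\<theta> < 0" "-1 \<le> s"
  shows "Im (Li2 (- exp (Complex s \<theta>))) \<ge> - \<theta> * s - 28"
proof -
  define q where "q s = Im (Li2 (- exp (Complex s \<theta>)))" for s
  define \<psi> where "\<psi> s = q s + \<theta> * s - 9 * exp (-s)" for s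
  have "\<psi> (-1) \<le> \<psi> s"
  proof (rule DERIV_nonneg_imp_nondecreasing[OF assms(3)])
    fix x :: real
    define L where "L = Im (Ln (1 + exp (- Complex x \<theta>)))"
    have d: "(\<psi> has_real_derivative (- Im (Ln (1 + exp (Complex x \<theta>))) + \<theta> - 9 * (exp (-x) * -1))) (at x)"
      unfolding \<psi>_def q_def
      by (intro derivative_intros q_deriv assms) (auto intro!: derivative_eq_intros)
    have "- Im (Ln (1 + exp (Complex x \<theta>))) + \<theta> - 9 * (exp (-x) * -1) = 9 * exp (-x) - L"
      using Ln_decomp(1)[OF assms(1,2), of x] by (simp add: L_def)
    moreover have "L \<le> 9 * exp (-x)"
    proof (cases "exp (-x) < 1/2")
      case True
      have ne: "norm (exp (- Complex x \<theta>)) = exp (-x)" by (simp add: norm_exp_eq_Re)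
      have "L \<le> norm (Ln (1 + exp (- Complex x \<theta>)))" unfolding L_def using abs_Im_le_cmod by (rule order_trans[OF abs_ge_self])
      also have "\<dots> \<le> 2 * exp (-x)" using norm_Ln_le[of "exp (- Complex x \<theta>)"] True ne by simp
      finally show ?thesis using exp_gt_zero[of "-x"] by linarith
    next
      case False
      then show ?thesis using Ln_decomp(3)[OF assms(1,2), of x] pi_less_4 by (simp add: L_def)
    qed
    ultimately show "\<exists>y. (\<psi> has_real_derivative y) (at x) \<and> 0 \<le> y" using d by auto
  qed
  moreover have "q (-1) \<ge> -1" using q_small[of "-1" \<theta>] by (simp add: q_def)
  moreover have "exp (1::real) \<le> 3" by (rule exp_le)
  ultimately have "\<psi> s \<ge> -28" using assms by (simp add: \<psi>_def)
  moreover have "exp (-s) > 0" by simp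
  ultimately show ?thesis unfolding \<psi>_def q_def by linarith
qed



lemma Re_f51:
  "Re (f51 \<sigma> \<mu> (Complex t1 t2)) =
     - (Im (Li2 (- exp (complex_of_real (2 * pi * \<mu>))))
        + Im (Li2 (- exp (Complex (2*pi*(t1-\<sigma>)) (2*pi*t2))))
        + Im (Li2 (- exp (Complex (2*pi*(t1+\<sigma>)) (2*pi*t2))))) / (2*pi)
     - 2*pi*\<mu>*t2 + pi*(t1 - \<mu>)"
proof -
  have e1: "2 * complex_of_real pi * (Complex t1 t2 - complex_of_real \<sigma>) = Complex (2*pi*(t1-\<sigma>)) (2*pi*t2)"
    by (simp add: complex_eq_iff)
  have e2: "2 * complex_of_real pi * (Complex t1 t2 + complex_of_real \<sigma>) = Complex (2*pi*(t1+\<sigma>)) (2*pi*t2)"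
    by (simp add: complex_eq_iff)
  have d: "Re (x / (2 * complex_of_real pi * \<i>)) = Im x / (2*pi)" for x
  proof -
    have "x / (2 * complex_of_real pi * \<i>) = - \<i> * x / complex_of_real (2*pi)"
      by (simp add: field_simps)
    then show ?thesis by (simp add: Re_divide_of_real)
  qed
  show ?thesis unfolding f51_def e1 e2 plus_complex.sel minus_complex.sel d
    by (simp add: algebra_simps)
qed

lemma norm_main:
  "norm (exp (f / complex_of_real (b^2)) * g51 \<mu> (Complex t1 t2)) = exp (Re f / b^2 + pi*(t1-\<mu>))"
  by (simp add: g51_def norm_mult norm_exp_eq_Re Re_divide_of_real exp_add)



theorem lemma5p1:
  fixes \<sigma> \<mu> \<delta> :: real
  assumes "0 < \<delta>" and "\<delta> < 1/8"
  shows "\<exists>C c. C > 0 \<and> c > 0 \<and> (\<exists>T b0. b0 > 0 \<and>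
           (\<forall>t1 t2 b. T \<le> \<bar>t1\<bar> \<longrightarrow> -1/2 < t2 \<longrightarrow> t2 < -1/4 - \<delta> \<longrightarrow> 0 < b \<longrightarrow> b < b0 \<longrightarrow>
              norm (exp (f51 \<sigma> \<mu> (Complex t1 t2) / complex_of_real (b^2)) * g51 \<mu> (Complex t1 t2))
                \<le> C * exp (- (c / b^2) * \<bar>t1\<bar>)))"
proof -
  define IA where "IA = Im (Li2 (- exp (complex_of_real (2 * pi * \<mu>))))"
  define K where "K = \<bar>IA\<bar>/(2*pi) + 28/pi + 1/pi + 2*pi*\<bar>\<mu>\<bar>"
  define T where "T = \<bar>\<sigma>\<bar> + 1 + K/(pi*\<delta>) + 2*K/pi"
  have Kpos: "K \<ge> 0" unfolding K_def by (simp add: pi_gt_zero)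
  have TK1: "K \<le> pi*\<delta>*(T - \<bar>\<sigma>\<bar> - 1)" and TK2: "K \<le> pi/2 * (T - \<bar>\<sigma>\<bar> - 1)"
    using Kpos assms pi_gt_zero by (auto simp: T_def field_simps)
  show ?thesis
  proof (intro exI conjI allI impI)
    show "exp (- pi * \<mu>) > 0" "2*pi*\<delta> > 0" "\<delta> > 0" using assms by auto
    fix t1 t2 b :: real
    assume t1: "T \<le> \<bar>t1\<bar>" and t2: "-1/2 < t2" "t2 < -1/4 - \<delta>" and b: "0 < b" "b < \<delta>"
    define \<theta> where "\<theta> = 2*pi*t2"
    define Bm where "Bm = Im (Li2 (- exp (Complex (2*pi*(t1-\<sigma>)) \<theta>)))"
    define Bp where "Bp = Im (Li2 (- exp (Complex (2*pi*(t1+\<sigma>)) \<theta>)))"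
    define F where "F = f51 \<sigma> \<mu> (Complex t1 t2)"
    have "pi * (-1/2) < pi * t2" by (rule mult_strict_left_mono) (use t2 pi_gt_zero in auto)
    moreover have "pi * t2 < pi * 0" by (rule mult_strict_left_mono) (use t2 assms pi_gt_zero in auto)
    ultimately have th: "-pi < \<theta>" "\<theta> < 0" by (auto simp: \<theta>_def)
    have ReF: "Re F = - (IA + Bm + Bp) / (2*pi) - 2*pi*\<mu>*t2 + pi*(t1 - \<mu>)"
      unfolding F_def Re_f51 IA_def Bm_def Bp_def \<theta>_def by simp
    have mu_t2: "\<bar>2*pi*\<mu>*t2\<bar> \<le> pi*\<bar>\<mu>\<bar>"
    proof -
      have "\<bar>2*pi*\<mu>*t2\<bar> = pi*\<bar>\<mu>\<bar>*(2*\<bar>t2\<bar>)" by (simp add: abs_mult)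
      also have "\<dots> \<le> pi*\<bar>\<mu>\<bar>*1" using t2 assms by (intro mult_left_mono) auto
      finally show ?thesis by simp
    qed
    have b2: "b^2 \<le> \<delta>/8" "b^2 > 0"
    proof -
      have "b^2 \<le> \<delta>*\<delta>" using b by (simp add: power2_eq_square mult_mono)
      also have "\<dots> \<le> \<delta>*(1/8)" using assms by (intro mult_left_mono) auto
      finally show "b^2 \<le> \<delta>/8" by simp
      show "b^2 > 0" using b by simp
    qed
    have Tge: "T \<ge> \<bar>\<sigma>\<bar> + 1" using Kpos assms pi_gt_zero by (simp add: T_def)
    have pmu: "pi*(-\<mu>) \<le> pi*\<bar>\<mu>\<bar>" using pi_gt_zero by (intro mult_left_mono) auto
    have ReF2: "Re F = - (IA + Bm + Bp) / (2*pi) - 2*pi*\<mu>*t2 + pi*t1 + pi*(-\<mu>)"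
      using ReF by (simp add: algebra_simps)
    have IAdiv: "-IA/(2*pi) \<le> \<bar>IA\<bar>/(2*pi)" using pi_gt_zero by (intro divide_right_mono) auto
    have mt: "-(2*pi*\<mu>*t2) \<le> pi*\<bar>\<mu>\<bar>" using mu_t2 abs_ge_minus_self[of "2*pi*\<mu>*t2"] by linarith
    have pos1: "1/pi \<ge> 0" "28/pi \<ge> 0" using pi_gt_zero by auto
    have key: "Re F + pi*t1*b^2 \<le> - (2*pi*\<delta>) * \<bar>t1\<bar>"
    proof (cases "t1 \<ge> 0")
      case True
      have "t1 - \<sigma> \<ge> 1" "t1 + \<sigma> \<ge> 1" using Tge t1 True by linarith+
      then have "0 \<le> 2*pi*(t1-\<sigma>)" "0 \<le> 2*pi*(t1+\<sigma>)" using pi_gt_zero by simp_all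
      then have s: "-1 \<le> 2*pi*(t1-\<sigma>)" "-1 \<le> 2*pi*(t1+\<sigma>)" by linarith+
      have lm: "Bm \<ge> - \<theta> * (2*pi*(t1-\<sigma>)) - 28" unfolding Bm_def by (rule q_lower[OF th s(1)])
      have lp: "Bp \<ge> - \<theta> * (2*pi*(t1+\<sigma>)) - 28" unfolding Bp_def by (rule q_lower[OF th s(2)])
      have e: "- \<theta> * (2*pi*(t1-\<sigma>)) - \<theta> * (2*pi*(t1+\<sigma>)) = - (8*pi^2*t1*t2)"
        by (simp add: \<theta>_def algebra_simps power2_eq_square)
      have "Bm + Bp \<ge> - (8*pi^2*t1*t2) - 56" using lm lp e by linarith
      then have "- (Bm + Bp) / (2*pi) \<le> (8*pi^2*t1*t2 + 56) / (2*pi)"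
        using pi_gt_zero by (intro divide_right_mono) auto
      also have "\<dots> = 4*pi*t1*t2 + 28/pi" using pi_gt_zero by (simp add: field_simps power2_eq_square)
      finally have 1: "- (Bm + Bp) / (2*pi) \<le> 4*pi*t1*t2 + 28/pi" .
      have 2: "- (IA + Bm + Bp) / (2*pi) = -IA/(2*pi) + - (Bm + Bp) / (2*pi)"
        by (simp add: field_simps)
      have "Re F \<le> K + 4*pi*t1*t2 + pi*t1"
        using ReF2 1 2 IAdiv mt pmu pos1 unfolding K_def by linarith
      moreover have "pi*t1*(4*t2+1) \<le> pi*t1*(-4*\<delta>)" using True t2 pi_gt_zero by (intro mult_left_mono) auto
      then have "4*pi*t1*t2 + pi*t1 \<le> -4*(pi*\<delta>*t1)" by (simp add: algebra_simps)
      moreover have "pi*\<delta>*(T - \<bar>\<sigma>\<bar> - 1) \<le> pi*\<delta>*t1" using t1 True assms pi_gt_zero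
        by (intro mult_left_mono) auto
      moreover have "pi*t1*b^2 \<le> pi*t1*(\<delta>/8)" using True b2 pi_gt_zero by (intro mult_left_mono) auto
      then have "pi*t1*b^2 \<le> (pi*\<delta>*t1)/8" by (simp add: algebra_simps)
      moreover have "- (2*pi*\<delta>) * \<bar>t1\<bar> = -2*(pi*\<delta>*t1)" using True by simp
      moreover have "pi*\<delta>*t1 \<ge> 0" using True assms pi_gt_zero by simp
      ultimately show ?thesis using TK1 by linarith
    next
      case False
      have "t1 - \<sigma> \<le> -1" "t1 + \<sigma> \<le> -1" using Tge t1 False by linarith+
      then have "2*pi*(t1-\<sigma>) \<le> 2*pi*(-1)" "2*pi*(t1+\<sigma>) \<le> 2*pi*(-1)" using pi_gt_zero
        by (intro mult_left_mono; simp)+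
      then have s: "2*pi*(t1-\<sigma>) \<le> -1" "2*pi*(t1+\<sigma>) \<le> -1" using pi_ge_two by linarith+
      have "\<bar>Bm\<bar> \<le> 1" "\<bar>Bp\<bar> \<le> 1" unfolding Bm_def Bp_def using q_small s by auto
      then have "- (Bm + Bp) / (2*pi) \<le> 2 / (2*pi)"
        using pi_gt_zero by (intro divide_right_mono) auto
      then have 1: "- (Bm + Bp) / (2*pi) \<le> 1/pi" by simp
      have 2: "- (IA + Bm + Bp) / (2*pi) = -IA/(2*pi) + - (Bm + Bp) / (2*pi)"
        by (simp add: field_simps)
      have "Re F \<le> K + pi*t1"
        using ReF2 1 2 IAdiv mt pmu pos1 unfolding K_def by linarith
      moreover have "pi/2*(T - \<bar>\<sigma>\<bar> - 1) \<le> pi/2*(-t1)" using t1 False pi_gt_zero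
        by (intro mult_left_mono) auto
      moreover have "pi*t1*b^2 \<le> 0" using False b2 pi_gt_zero by (simp add: mult_le_0_iff)
      moreover have "pi*t1*(1/2) \<le> pi*t1*(2*\<delta>)" using False assms pi_gt_zero
        by (intro mult_left_mono_neg) (auto simp: mult_nonneg_nonpos)
      moreover have "- (2*pi*\<delta>) * \<bar>t1\<bar> = pi*t1*(2*\<delta>)" using False by simp
      moreover have "pi/2*(-t1) = - (pi*t1*(1/2))" by simp
      ultimately show ?thesis using TK2 by linarith
    qed
    have "Re F / b^2 + pi*(t1-\<mu>) \<le> - pi*\<mu> + - (2*pi*\<delta> / b^2) * \<bar>t1\<bar>"
    proof -
      have "(Re F + pi*t1*b^2) / b^2 \<le> (- (2*pi*\<delta>) * \<bar>t1\<bar>) / b^2"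
        using key b2 by (intro divide_right_mono) auto
      then show ?thesis using b2 by (simp add: field_simps)
    qed
    then have "exp (Re F / b^2 + pi*(t1-\<mu>)) \<le> exp (- pi*\<mu> + - (2*pi*\<delta> / b^2) * \<bar>t1\<bar>)" by simp
    then show "norm (exp (f51 \<sigma> \<mu> (Complex t1 t2) / complex_of_real (b^2)) * g51 \<mu> (Complex t1 t2))
                \<le> exp (- pi * \<mu>) * exp (- (2*pi*\<delta> / b^2) * \<bar>t1\<bar>)"
      unfolding norm_main F_def[symmetric] mult_exp_exp .
  qed
qed


end
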